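(* Let $K$ be a field, $0<n<\omega$, and $(R_i\mid i<n)$ a sequence of $K$-algebras such that $R_0$ possesses a strong multiplicative basis $B_0$ containing a non-zero idempotent $e$, and each $R_i$ ($0<i<n$) has a multiplicative basis. Then the $K$-algebra $R=\prod_{i<n}R_i$ has a strong multiplicative basis.
   Context: A $K$-linear basis $B$ of a $K$-algebra is multiplicative if for all $b,b'\in B$ either $bb'=0$ or $bb'\in B$, and strong multiplicative if $bb'\in B$ for all $b,b'\in B$. *)

theory Defs
  imports Main "HOL-Library.FuncSet"
begin

record ('k, 'a) kalg =
  alg_carrier :: "'a set"
  alg_add :: "'a \<Rightarrow> 'a \<Rightarrow> 'a"
  alg_zero :: "'a"
  alg_smult :: "'k \<Rightarrow> 'a \<Rightarrow> 'a"
  alg_mult :: "'a \<Rightarrow> 'a \<Rightarrow> 'a"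

definition is_kalg :: "('k::field, 'a) kalg \<Rightarrow> bool" where
  "is_kalg A \<longleftrightarrow>
     (let C = alg_carrier A; p = alg_add A; z = alg_zero A; s = alg_smult A; m = alg_mult A in
       z \<in> C \<and>
       (\<forall>x\<in>C. \<forall>y\<in>C. p x y \<in> C) \<and>
       (\<forall>a. \<forall>x\<in>C. s a x \<in> C) \<and>
       (\<forall>x\<in>C. \<forall>y\<in>C. m x y \<in> C) \<and>
       (\<forall>x\<in>C. \<forall>y\<in>C. \<forall>w\<in>C. p (p x y) w = p x (p y w)) \<and>
       (\<forall>x\<in>C. \<forall>y\<in>C. p x y = p y x) \<and>
       (\<forall>x\<in>C. p z x = x) \<and>
       (\<forall>x\<in>C. \<exists>y\<in>C. p x y = z) \<and>
       (\<forall>a. \<forall>x\<in>C. \<forall>y\<in>C. s a (p x y) = p (s a x) (s a y)) \<and>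
       (\<forall>a b. \<forall>x\<in>C. s (a + b) x = p (s a x) (s b x)) \<and>
       (\<forall>a b. \<forall>x\<in>C. s (a * b) x = s a (s b x)) \<and>
       (\<forall>x\<in>C. s 1 x = x) \<and>
       (\<forall>x\<in>C. \<forall>y\<in>C. \<forall>w\<in>C. m (p x y) w = p (m x w) (m y w)) \<and>
       (\<forall>x\<in>C. \<forall>y\<in>C. \<forall>w\<in>C. m x (p y w) = p (m x y) (m x w)) \<and>
       (\<forall>a. \<forall>x\<in>C. \<forall>y\<in>C. m (s a x) y = s a (m x y)) \<and>
       (\<forall>a. \<forall>x\<in>C. \<forall>y\<in>C. m x (s a y) = s a (m x y)) \<and>
       (\<forall>x\<in>C. \<forall>y\<in>C. \<forall>w\<in>C. m (m x y) w = m x (m y w)))"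

primrec lin_comb :: "('k, 'a) kalg \<Rightarrow> ('a \<Rightarrow> 'k) \<Rightarrow> 'a list \<Rightarrow> 'a" where
  "lin_comb A c [] = alg_zero A"
| "lin_comb A c (b # bs) = alg_add A (alg_smult A (c b) b) (lin_comb A c bs)"

definition is_lin_basis :: "('k::field, 'a) kalg \<Rightarrow> 'a set \<Rightarrow> bool" where
  "is_lin_basis A B \<longleftrightarrow>
     B \<subseteq> alg_carrier A \<and>
     (\<forall>bs c. distinct bs \<and> set bs \<subseteq> B \<and> lin_comb A c bs = alg_zero A \<longrightarrow>
              (\<forall>b\<in>set bs. c b = 0)) \<and>
     (\<forall>x\<in>alg_carrier A. \<exists>bs c. distinct bs \<and> set bs \<subseteq> B \<and> x = lin_comb A c bs)"

definition mult_basis :: "('k::field, 'a) kalg \<Rightarrow> 'a set \<Rightarrow> bool" where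
  "mult_basis A B \<longleftrightarrow> is_lin_basis A B \<and>
     (\<forall>b\<in>B. \<forall>b'\<in>B. alg_mult A b b' = alg_zero A \<or> alg_mult A b b' \<in> B)"

definition strong_mult_basis :: "('k::field, 'a) kalg \<Rightarrow> 'a set \<Rightarrow> bool" where
  "strong_mult_basis A B \<longleftrightarrow> is_lin_basis A B \<and>
     (\<forall>b\<in>B. \<forall>b'\<in>B. alg_mult A b b' \<in> B)"

definition prod_alg :: "nat \<Rightarrow> (nat \<Rightarrow> ('k, 'a) kalg) \<Rightarrow> ('k, nat \<Rightarrow> 'a) kalg" where
  "prod_alg n R = \<lparr>
     alg_carrier = (\<Pi>\<^sub>E i\<in>{..<n}. alg_carrier (R i)),
     alg_add = (\<lambda>f g. restrict (\<lambda>i. alg_add (R i) (f i) (g i)) {..<n}),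
     alg_zero = restrict (\<lambda>i. alg_zero (R i)) {..<n},
     alg_smult = (\<lambda>a f. restrict (\<lambda>i. alg_smult (R i) a (f i)) {..<n}),
     alg_mult = (\<lambda>f g. restrict (\<lambda>i. alg_mult (R i) (f i) (g i)) {..<n}) \<rparr>"

end

theory Submission
  imports Defs
begin

context
  fixes A :: "('k::field, 'a) kalg"
  assumes K: "is_kalg A"
begin

lemma kz: "alg_zero A \<in> alg_carrier A" using K unfolding is_kalg_def Let_def by auto
lemma kadd: "x \<in> alg_carrier A \<Longrightarrow> y \<in> alg_carrier A \<Longrightarrow> alg_add A x y \<in> alg_carrier A"
  using K unfolding is_kalg_def Let_def by auto
lemma ksm: "x \<in> alg_carrier A \<Longrightarrow> alg_smult A a x \<in> alg_carrier A"
  using K unfolding is_kalg_def Let_def by auto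
lemma kmul: "x \<in> alg_carrier A \<Longrightarrow> y \<in> alg_carrier A \<Longrightarrow> alg_mult A x y \<in> alg_carrier A"
  using K unfolding is_kalg_def Let_def by auto
lemma kassoc: "x \<in> alg_carrier A \<Longrightarrow> y \<in> alg_carrier A \<Longrightarrow> w \<in> alg_carrier A \<Longrightarrow>
  alg_add A (alg_add A x y) w = alg_add A x (alg_add A y w)"
  using K unfolding is_kalg_def Let_def by auto
lemma kcomm: "x \<in> alg_carrier A \<Longrightarrow> y \<in> alg_carrier A \<Longrightarrow> alg_add A x y = alg_add A y x"
  using K unfolding is_kalg_def Let_def by auto
lemma kzl: "x \<in> alg_carrier A \<Longrightarrow> alg_add A (alg_zero A) x = x"
  using K unfolding is_kalg_def Let_def by auto
lemma kzr: "x \<in> alg_carrier A \<Longrightarrow> alg_add A x (alg_zero A) = x"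
  using kzl[of x] kcomm[OF _ kz, of x] by simp
lemma kinv0: "\<forall>x\<in>alg_carrier A. \<exists>y\<in>alg_carrier A. alg_add A x y = alg_zero A"
  using K unfolding is_kalg_def Let_def by auto
lemma kinv: "x \<in> alg_carrier A \<Longrightarrow> \<exists>y\<in>alg_carrier A. alg_add A x y = alg_zero A"
  using kinv0 by blast
lemma ksd: "x \<in> alg_carrier A \<Longrightarrow> y \<in> alg_carrier A \<Longrightarrow>
   alg_smult A a (alg_add A x y) = alg_add A (alg_smult A a x) (alg_smult A a y)"
  using K unfolding is_kalg_def Let_def by auto
lemma ksd2: "x \<in> alg_carrier A \<Longrightarrow>
   alg_smult A (a + b) x = alg_add A (alg_smult A a x) (alg_smult A b x)"
  using K unfolding is_kalg_def Let_def by auto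
lemma ks1: "x \<in> alg_carrier A \<Longrightarrow> alg_smult A 1 x = x"
  using K unfolding is_kalg_def Let_def by auto
lemma kmdl: "x \<in> alg_carrier A \<Longrightarrow> y \<in> alg_carrier A \<Longrightarrow> w \<in> alg_carrier A \<Longrightarrow>
  alg_mult A (alg_add A x y) w = alg_add A (alg_mult A x w) (alg_mult A y w)"
  using K unfolding is_kalg_def Let_def by auto
lemma kmdr: "x \<in> alg_carrier A \<Longrightarrow> y \<in> alg_carrier A \<Longrightarrow> w \<in> alg_carrier A \<Longrightarrow>
  alg_mult A x (alg_add A y w) = alg_add A (alg_mult A x y) (alg_mult A x w)"
  using K unfolding is_kalg_def Let_def by auto

lemma kidem: assumes x: "x \<in> alg_carrier A" and "alg_add A x x = x" shows "x = alg_zero A"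
proof -
  obtain y where y: "y \<in> alg_carrier A" "alg_add A x y = alg_zero A" using kinv x by blast
  have "alg_zero A = alg_add A (alg_add A x x) y" using assms y by simp
  also have "\<dots> = alg_add A x (alg_zero A)" using kassoc x y by simp
  also have "\<dots> = x" using kzr x by simp
  finally show ?thesis by simp
qed

lemma ksz: "alg_smult A a (alg_zero A) = alg_zero A"
proof (rule kidem)
  show "alg_smult A a (alg_zero A) \<in> alg_carrier A" using ksm[OF kz] .
  show "alg_add A (alg_smult A a (alg_zero A)) (alg_smult A a (alg_zero A)) = alg_smult A a (alg_zero A)"
    using ksd[OF kz kz, of a] kzl[OF kz] by simp
qed

lemma ks0: assumes x: "x \<in> alg_carrier A" shows "alg_smult A 0 x = alg_zero A"
proof (rule kidem)
  show "alg_smult A 0 x \<in> alg_carrier A" using ksm[OF x] .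
  show "alg_add A (alg_smult A 0 x) (alg_smult A 0 x) = alg_smult A 0 x"
    using ksd2[OF x, of 0 0] by simp
qed

lemma kmzl: assumes x: "x \<in> alg_carrier A" shows "alg_mult A (alg_zero A) x = alg_zero A"
proof (rule kidem)
  show "alg_mult A (alg_zero A) x \<in> alg_carrier A" using kmul[OF kz x] .
  show "alg_add A (alg_mult A (alg_zero A) x) (alg_mult A (alg_zero A) x) = alg_mult A (alg_zero A) x"
    using kmdl[OF kz kz x] kzl[OF kz] by simp
qed

lemma kmzr: assumes x: "x \<in> alg_carrier A" shows "alg_mult A x (alg_zero A) = alg_zero A"
proof (rule kidem)
  show "alg_mult A x (alg_zero A) \<in> alg_carrier A" using kmul[OF x kz] .
  show "alg_add A (alg_mult A x (alg_zero A)) (alg_mult A x (alg_zero A)) = alg_mult A x (alg_zero A)"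
    using kmdr[OF x kz kz] kzl[OF kz] by simp
qed

lemma kneg: "x \<in> alg_carrier A \<Longrightarrow> alg_add A (alg_smult A (- t) x) (alg_smult A t x) = alg_zero A"
  using ksd2[of x "- t" t] ks0[of x] by simp

end

primrec lcg :: "('k, 'a) kalg \<Rightarrow> ('b \<Rightarrow> 'a) \<Rightarrow> 'b list \<Rightarrow> 'a" where
  "lcg A g [] = alg_zero A"
| "lcg A g (b # bs) = alg_add A (g b) (lcg A g bs)"

lemma lin_comb_lcg: "lin_comb A c xs = lcg A (\<lambda>b. alg_smult A (c b) b) xs"
  by (induct xs) auto

lemma lcg_map: "lcg A g (map f xs) = lcg A (g \<circ> f) xs"
  by (induct xs) auto

lemma lcg_cong: "(\<And>x. x \<in> set xs \<Longrightarrow> g x = h x) \<Longrightarrow> lcg A g xs = lcg A h xs"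
  by (induct xs) auto

lemma lin_comb_cong: "(\<And>x. x \<in> set xs \<Longrightarrow> c x = d x) \<Longrightarrow> lin_comb A c xs = lin_comb A d xs"
  by (induct xs) auto

context
  fixes A :: "('k::field, 'a) kalg"
  assumes K: "is_kalg A"
begin

lemma lcg_closed: "(\<And>x. x \<in> set xs \<Longrightarrow> g x \<in> alg_carrier A) \<Longrightarrow> lcg A g xs \<in> alg_carrier A"
  by (induct xs) (auto simp: kz[OF K] kadd[OF K])

lemma lcg_split: assumes "\<And>x. x \<in> set xs \<Longrightarrow> g x \<in> alg_carrier A"
  shows "lcg A g xs = alg_add A (lcg A g (filter P xs)) (lcg A g (filter (\<lambda>x. \<not> P x) xs))"
  using assms
proof (induct xs)
  case Nil
  then show ?case by (simp add: kzl[OF K] kz[OF K])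
next
  case (Cons a xs)
  have ga: "g a \<in> alg_carrier A" using Cons by simp
  have c1: "lcg A g (filter P xs) \<in> alg_carrier A" using Cons by (intro lcg_closed) auto
  have c2: "lcg A g (filter (\<lambda>x. \<not> P x) xs) \<in> alg_carrier A" using Cons by (intro lcg_closed) auto
  have IH: "lcg A g xs = alg_add A (lcg A g (filter P xs)) (lcg A g (filter (\<lambda>x. \<not> P x) xs))"
    using Cons by simp
  show ?case
  proof (cases "P a")
    case True
    then show ?thesis using IH ga c1 c2 by (simp add: kassoc[OF K])
  next
    case False
    let ?X = "lcg A g (filter P xs)" and ?Y = "lcg A g (filter (\<lambda>x. \<not> P x) xs)"
    have "alg_add A (g a) (alg_add A ?X ?Y) = alg_add A (alg_add A (g a) ?X) ?Y"
      using kassoc[OF K ga c1 c2] by simp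
    also have "\<dots> = alg_add A (alg_add A ?X (g a)) ?Y" using kcomm[OF K ga c1] by simp
    also have "\<dots> = alg_add A ?X (alg_add A (g a) ?Y)" using kassoc[OF K c1 ga c2] by simp
    finally show ?thesis using IH False by simp
  qed
qed

lemma lcg_zeros: "(\<And>x. x \<in> set xs \<Longrightarrow> g x = alg_zero A) \<Longrightarrow> lcg A g xs = alg_zero A"
  by (induct xs) (auto simp: kzl[OF K] kz[OF K])

lemma lcg_filter: assumes "\<And>x. x \<in> set xs \<Longrightarrow> g x \<in> alg_carrier A"
  and "\<And>x. x \<in> set xs \<Longrightarrow> \<not> P x \<Longrightarrow> g x = alg_zero A"
  shows "lcg A g xs = lcg A g (filter P xs)"
proof -
  have "lcg A g (filter (\<lambda>x. \<not> P x) xs) = alg_zero A" using assms(2) by (intro lcg_zeros) auto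
  moreover have "lcg A g (filter P xs) \<in> alg_carrier A" using assms(1) by (intro lcg_closed) auto
  ultimately show ?thesis using lcg_split[OF assms(1), where P=P] kzr[OF K] by simp
qed

lemma lcg_smult_e: "e \<in> alg_carrier A \<Longrightarrow>
   lcg A (\<lambda>b. alg_smult A (h b) e) xs = alg_smult A (sum_list (map h xs)) e"
  by (induct xs) (auto simp: ks0[OF K] ksd2[OF K])

lemma lin_comb_closed: "set xs \<subseteq> alg_carrier A \<Longrightarrow> lin_comb A c xs \<in> alg_carrier A"
  unfolding lin_comb_lcg by (intro lcg_closed) (auto simp: ksm[OF K])

lemma lin_comb_upd: assumes "distinct xs" "e \<in> set xs" "set xs \<subseteq> alg_carrier A"
  shows "lin_comb A (c(e := c e + t)) xs = alg_add A (lin_comb A c xs) (alg_smult A t e)"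
  using assms
proof (induct xs)
  case Nil
  then show ?case by simp
next
  case (Cons a xs)
  have a: "a \<in> alg_carrier A" and xs: "set xs \<subseteq> alg_carrier A" using Cons by auto
  have e: "e \<in> alg_carrier A" using Cons by auto
  show ?case
  proof (cases "a = e")
    case True
    have L1: "lin_comb A (c(e := c e + t)) xs = lin_comb A c xs"
      using Cons True by (intro lin_comb_cong) auto
    have L2: "lin_comb A c xs \<in> alg_carrier A" using lin_comb_closed xs by blast
    note L = L1 L2
    let ?u = "alg_smult A (c e) e" and ?v = "alg_smult A t e" and ?L = "lin_comb A c xs"
    have u: "?u \<in> alg_carrier A" and v: "?v \<in> alg_carrier A" using ksm[OF K e] by auto
    have "alg_add A (alg_smult A (c e + t) e) ?L = alg_add A (alg_add A ?u ?v) ?L"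
      using ksd2[OF K e] by simp
    also have "\<dots> = alg_add A ?u (alg_add A ?v ?L)" using kassoc[OF K u v] L by simp
    also have "\<dots> = alg_add A ?u (alg_add A ?L ?v)" using kcomm[OF K v] L by simp
    also have "\<dots> = alg_add A (alg_add A ?u ?L) ?v" using kassoc[OF K u _ v] L by simp
    finally have calc: "alg_add A (alg_smult A (c e + t) e) ?L = alg_add A (alg_add A ?u ?L) ?v" .
    show ?thesis unfolding True lin_comb.simps fun_upd_same L1 by (rule calc)
  next
    case False
    have IH: "lin_comb A (c(e := c e + t)) xs = alg_add A (lin_comb A c xs) (alg_smult A t e)"
      by (rule Cons(1)) (use Cons.prems False in auto)
    have F: "a \<noteq> e" using False .
    show ?thesis unfolding lin_comb.simps fun_upd_other[OF F] IH
      using kassoc[OF K ksm[OF K a] lin_comb_closed[OF xs] ksm[OF K e]] by simp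
  qed
qed

lemma basis_nonzero: assumes "is_lin_basis A B" "b \<in> B" shows "b \<noteq> alg_zero A"
proof
  assume bz: "b = alg_zero A"
  have "lin_comb A (\<lambda>_. 1::'k) [b] = alg_zero A"
    using bz by (simp add: ksz[OF K] kzl[OF K] kz[OF K] ks1[OF K])
  moreover have "\<forall>bs c. distinct bs \<and> set bs \<subseteq> B \<and> lin_comb A c bs = alg_zero A \<longrightarrow> (\<forall>b\<in>set bs. c b = 0)"
    using assms(1) unfolding is_lin_basis_def by blast
  note sp = spec[OF spec[OF this, of "[b]"], of "\<lambda>_. 1::'k"]
  have "distinct [b] \<and> set [b] \<subseteq> B \<and> lin_comb A (\<lambda>_. 1::'k) [b] = alg_zero A"
    using calculation assms(2) by simp
  then have "(1::'k) = 0" using sp by simp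
  then show False by simp
qed

end

lemma prod_lcg_comp: "j < n \<Longrightarrow> lcg (prod_alg n R) g xs j = lcg (R j) (\<lambda>b. g b j) xs"
  by (induct xs) (auto simp: prod_alg_def)

lemma prod_lin_comb_comp: "j < n \<Longrightarrow> lin_comb (prod_alg n R) c xs j =
   lcg (R j) (\<lambda>b. alg_smult (R j) (c b) (b j)) xs"
  unfolding lin_comb_lcg by (simp add: prod_lcg_comp) (simp add: prod_alg_def)

lemma prod_lin_comb_out: "\<not> j < n \<Longrightarrow> lin_comb (prod_alg n R) c xs j = undefined"
  by (cases xs) (auto simp: prod_alg_def)

lemma distinct_concat_blocks:
  "distinct is \<Longrightarrow> (\<And>i. i \<in> set is \<Longrightarrow> distinct (F i)) \<Longrightarrow>
   (\<And>i k. i \<in> set is \<Longrightarrow> k \<in> set is \<Longrightarrow> i \<noteq> k \<Longrightarrow> set (F i) \<inter> set (F k) = {}) \<Longrightarrow>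
   distinct (concat (map F is))"
proof (induct "is")
  case Nil
  then show ?case by simp
next
  case (Cons a as)
  have "distinct (concat (map F as))" using Cons by auto
  moreover have "set (F a) \<inter> set (concat (map F as)) = {}" using Cons(2,4) by auto
  ultimately show ?case using Cons by simp
qed

lemma filter_concat_none:
  "(\<And>i. i \<in> set is \<Longrightarrow> filter Q (F i) = []) \<Longrightarrow> filter Q (concat (map F is)) = []"
  by (induct "is") auto

lemma filter_concat_blocks:
  "j \<in> set is \<Longrightarrow> distinct is \<Longrightarrow> (\<And>i. i \<in> set is \<Longrightarrow> i \<noteq> j \<Longrightarrow> filter Q (F i) = []) \<Longrightarrow>
   filter Q (F j) = F j \<Longrightarrow> filter Q (concat (map F is)) = F j"
proof (induct "is")
  case Nil
  then show ?case by simp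
next
  case (Cons a as)
  show ?case
  proof (cases "a = j")
    case True
    then have "filter Q (concat (map F as)) = []" using Cons by (intro filter_concat_none) auto
    then show ?thesis using True Cons by simp
  next
    case False
    then show ?thesis using Cons by auto
  qed
qed


lemma sum_list_zeros: "(\<And>x. x \<in> set xs \<Longrightarrow> f x = (0::'k::field)) \<Longrightarrow> sum_list (map f xs) = 0"
  by (induct xs) auto

theorem lemma5p5:
  fixes R :: "nat \<Rightarrow> ('k::field, 'a) kalg"
    and n :: nat and B0 :: "'a set" and e :: 'a
  assumes "0 < n"
    and "\<forall>i<n. is_kalg (R i)"
    and "strong_mult_basis (R 0) B0"
    and "e \<in> B0" and "e \<noteq> alg_zero (R 0)" and "alg_mult (R 0) e e = e"
    and "\<forall>i. 0 < i \<and> i < n \<longrightarrow> (\<exists>B. mult_basis (R i) B)"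
  shows "\<exists>B. strong_mult_basis (prod_alg n R) B"
proof -
  note n0 = assms(1)
  have Ki: "is_kalg (R i)" if "i < n" for i using assms(2) that by blast
  have K0: "is_kalg (R 0)" using Ki n0 .
  have SB0: "is_lin_basis (R 0) B0" and SM0: "\<And>b b'. b \<in> B0 \<Longrightarrow> b' \<in> B0 \<Longrightarrow> alg_mult (R 0) b b' \<in> B0"
    using assms(3) unfolding strong_mult_basis_def by auto
  have B0C: "B0 \<subseteq> alg_carrier (R 0)" using SB0 unfolding is_lin_basis_def by auto
  have eB0: "e \<in> B0" using assms(4) .
  have eC: "e \<in> alg_carrier (R 0)" using B0C assms(4) by auto
  define Bj where "Bj i = (SOME B. mult_basis (R i) B)" for i
  have MBj: "mult_basis (R i) (Bj i)" if "0 < i" "i < n" for i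
    using assms(7) that unfolding Bj_def by (metis someI_ex)
  have LBj: "is_lin_basis (R i) (Bj i)" if "0 < i" "i < n" for i
    using MBj[OF that] unfolding mult_basis_def by auto
  have BjC: "d \<in> alg_carrier (R i)" if "0 < i" "i < n" "d \<in> Bj i" for i d
    using LBj[OF that(1,2)] that(3) unfolding is_lin_basis_def by auto
  have Bjnz: "d \<noteq> alg_zero (R i)" if "0 < i" "i < n" "d \<in> Bj i" for i d
    using basis_nonzero[OF Ki[OF that(2)] LBj[OF that(1,2)] that(3)] .
  have Bjmul: "alg_mult (R i) c d = alg_zero (R i) \<or> alg_mult (R i) c d \<in> Bj i"
    if "0 < i" "i < n" "c \<in> Bj i" "d \<in> Bj i" for i c d
    using MBj[OF that(1,2)] that(3,4) unfolding mult_basis_def by auto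
  define P where "P = prod_alg n R"
  define inj0 where "inj0 x = (\<lambda>i\<in>{..<n}. if i = 0 then x else alg_zero (R i))" for x
  define E where "E i d = (\<lambda>j\<in>{..<n}. if j = 0 then e else if j = i then d else alg_zero (R j))" for i d
  define B where "B = inj0 ` B0 \<union> (\<Union>i\<in>{0<..<n}. E i ` Bj i)"
  have inj0_0[simp]: "inj0 x 0 = x" for x using n0 by (simp add: inj0_def)
  have inj0_j: "inj0 x j = alg_zero (R j)" if "0 < j" "j < n" for x j using that by (simp add: inj0_def)
  have E_0[simp]: "E i d 0 = e" for i d using n0 by (simp add: E_def)
  have E_i: "E i d i = d" if "0 < i" "i < n" for i d using that by (simp add: E_def)
  have E_j: "E i d j = alg_zero (R j)" if "0 < j" "j < n" "j \<noteq> i" for i d j using that by (simp add: E_def)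
  have inj0_ext: "inj0 x \<in> extensional {..<n}" for x by (simp add: inj0_def)
  have E_ext: "E i d \<in> extensional {..<n}" for i d by (simp add: E_def)
  have rext: "restrict F {..<n} = G" if "G \<in> extensional {..<n}" "\<And>i. i < n \<Longrightarrow> F i = G i" for F G
    using that by (metis extensional_restrict restrict_ext lessThan_iff)
  have Pcar: "alg_carrier P = (\<Pi>\<^sub>E i\<in>{..<n}. alg_carrier (R i))" by (simp add: P_def prod_alg_def)
  have Pmul: "alg_mult P f g = (\<lambda>i\<in>{..<n}. alg_mult (R i) (f i) (g i))" for f g
    by (simp add: P_def prod_alg_def)
  have Pzero: "alg_zero P j = alg_zero (R j)" if "j < n" for j using that by (simp add: P_def prod_alg_def)
  have inj0P: "inj0 x \<in> alg_carrier P" if "x \<in> alg_carrier (R 0)" for x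
    using that unfolding Pcar inj0_def by (auto simp: kz[OF Ki])
  have EP: "E i d \<in> alg_carrier P" if "0 < i" "i < n" "d \<in> Bj i" for i d
    using that eC unfolding Pcar E_def by (auto simp: kz[OF Ki] BjC)
  have BP: "B \<subseteq> alg_carrier P" unfolding B_def using inj0P EP B0C by auto
  have BcompC: "b j \<in> alg_carrier (R j)" if "b \<in> B" "j < n" for b j
    using BP that unfolding Pcar by (auto simp: PiE_iff)
  have inj0_ne_E: "inj0 x \<noteq> E i d" if "0 < i" "i < n" "d \<in> Bj i" for x i d
    using inj0_j[OF that(1,2), of x] E_i[OF that(1,2), of d] Bjnz[OF that] by auto
  have E_ne_E: "E i d \<noteq> E k d'" if "0 < i" "i < n" "d \<in> Bj i" "k \<noteq> i" for i d k d'
    using E_i[OF that(1,2), of d] E_j[OF that(1,2), of k d'] Bjnz[OF that(1-3)] that(4) by auto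
  have E_inj: "E i d = E i d' \<Longrightarrow> d = d'" if "0 < i" "i < n" for i d d'
    using E_i[OF that] by metis

  have Bcases: "(\<exists>x\<in>B0. b = inj0 x) \<or> (\<exists>i d. 0 < i \<and> i < n \<and> d \<in> Bj i \<and> b = E i d)"
    if "b \<in> B" for b using that unfolding B_def by auto
  have mzz: "alg_mult (R j) (alg_zero (R j)) (alg_zero (R j)) = alg_zero (R j)" if "j < n" for j
    using kmzl[OF Ki[OF that] kz[OF Ki[OF that]]] .
  have mul: "alg_mult P b b' \<in> B" if bB: "b \<in> B" and b'B: "b' \<in> B" for b b'
  proof -
    consider (a) x y where "x \<in> B0" "y \<in> B0" "b = inj0 x" "b' = inj0 y"
      | (b) x i d where "x \<in> B0" "0 < i" "i < n" "d \<in> Bj i" "b = inj0 x" "b' = E i d"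
      | (c) x i d where "x \<in> B0" "0 < i" "i < n" "d \<in> Bj i" "b = E i d" "b' = inj0 x"
      | (d) i c k d where "0 < i" "i < n" "c \<in> Bj i" "0 < k" "k < n" "d \<in> Bj k" "b = E i c" "b' = E k d"
      using Bcases[OF bB] Bcases[OF b'B] by (elim disjE exE conjE bexE) blast+
    then show ?thesis
    proof cases
      case a
      have "alg_mult P b b' = inj0 (alg_mult (R 0) x y)"
        unfolding Pmul a
        apply (rule rext[OF inj0_ext])
        subgoal for j by (cases "j = 0") (auto simp: inj0_j mzz)
        done
      then show ?thesis unfolding B_def using SM0[OF a(1,2)] by auto
    next
      case b
      have "alg_mult P b b' = inj0 (alg_mult (R 0) x e)"
      proof (unfold Pmul b, rule rext[OF inj0_ext])
        fix j assume j: "j < n"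
        show "alg_mult (R j) (inj0 x j) (E i d j) = inj0 (alg_mult (R 0) x e) j"
        proof (cases "j = 0")
          case False
          then show ?thesis using j b kmzl[OF Ki[OF j]] BjC
            by (cases "j = i") (auto simp: inj0_j E_i E_j mzz)
        qed simp
      qed
      then show ?thesis unfolding B_def using SM0[OF b(1) eB0] by auto
    next
      case c
      have "alg_mult P b b' = inj0 (alg_mult (R 0) e x)"
      proof (unfold Pmul c, rule rext[OF inj0_ext])
        fix j assume j: "j < n"
        show "alg_mult (R j) (E i d j) (inj0 x j) = inj0 (alg_mult (R 0) e x) j"
        proof (cases "j = 0")
          case False
          then show ?thesis using j c kmzr[OF Ki[OF j]] BjC
            by (cases "j = i") (auto simp: inj0_j E_i E_j mzz)
        qed simp
      qed
      then show ?thesis unfolding B_def using SM0[OF eB0 c(1)] by auto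
    next
      case d
      show ?thesis
      proof (cases "i = k \<and> alg_mult (R i) c d \<noteq> alg_zero (R i)")
        case True
        have "alg_mult P b b' = E i (alg_mult (R i) c d)"
        proof (unfold Pmul d, rule rext[OF E_ext])
          fix j assume j: "j < n"
          show "alg_mult (R j) (E i c j) (E k d j) = E i (alg_mult (R i) c d) j"
          proof (cases "j = 0")
            case False
            then show ?thesis using j d True
              by (cases "j = i") (auto simp: E_i E_j mzz)
          qed (simp add: assms(6))
        qed
        moreover have "alg_mult (R i) c d \<in> Bj i" using Bjmul[OF d(1,2,3)] d True by auto
        ultimately show ?thesis unfolding B_def using d by auto
      next
        case False
        have "alg_mult P b b' = inj0 e"
        proof (unfold Pmul d, rule rext[OF inj0_ext])
          fix j assume j: "j < n"
          show "alg_mult (R j) (E i c j) (E k d j) = inj0 e j"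
          proof (cases "j = 0")
            case False': False
            show ?thesis
            proof (cases "j = i")
              case True
              show ?thesis
              proof (cases "j = k")
                case True
                then show ?thesis using False \<open>j = i\<close> j False' d by (auto simp: E_i inj0_j)
              next
                case False
                then show ?thesis using \<open>j = i\<close> j False' d kmzr[OF Ki[OF j]] BjC
                  by (auto simp: E_i E_j inj0_j)
              qed
            next
              case False
              then show ?thesis using j False' d kmzl[OF Ki[OF j]] BjC
                by (cases "j = k") (auto simp: E_i E_j inj0_j mzz)
            qed
          qed (simp add: assms(6))
        qed
        then show ?thesis unfolding B_def using eB0 by auto
      qed
    qed
  qed
  have compj: "lin_comb P c L j = lin_comb (R j) (\<lambda>d. c (E j d))
        (map (\<lambda>b. b j) (filter (\<lambda>b. b \<in> E j ` Bj j) L))"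
    if L: "set L \<subseteq> B" and j: "0 < j" "j < n" for L c j
  proof -
    let ?g = "\<lambda>b. alg_smult (R j) (c b) (b j)"
    let ?Q = "\<lambda>b. b \<in> E j ` Bj j"
    have "lin_comb P c L j = lcg (R j) ?g L" unfolding P_def using j(2) by (rule prod_lin_comb_comp)
    also have "\<dots> = lcg (R j) ?g (filter ?Q L)"
    proof (rule lcg_filter[OF Ki[OF j(2)]])
      fix b assume b: "b \<in> set L"
      then show "?g b \<in> alg_carrier (R j)" using L BcompC j ksm[OF Ki[OF j(2)]] by auto
      assume nQ: "\<not> ?Q b"
      have bB: "b \<in> B" using b L by auto
      from Bcases[OF bB] have "b j = alg_zero (R j)"
      proof (elim disjE bexE exE conjE)
        fix x assume "b = inj0 x" then show ?thesis using inj0_j[OF j] by simp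
      next
        fix i d assume i: "0 < i" "i < n" "d \<in> Bj i" "b = E i d"
        then have "j \<noteq> i" using nQ by auto
        then show ?thesis using E_j[OF j] i(4) by simp
      qed
      then show "?g b = alg_zero (R j)" using ksz[OF Ki[OF j(2)]] by simp
    qed
    also have "filter ?Q L = map (E j) (map (\<lambda>b. b j) (filter ?Q L))"
      unfolding map_map by (rule map_idI[symmetric]) (auto simp: E_i[OF j])
    also have "lcg (R j) ?g (map (E j) (map (\<lambda>b. b j) (filter ?Q L))) =
       lin_comb (R j) (\<lambda>d. c (E j d)) (map (\<lambda>b. b j) (filter ?Q L))"
      unfolding lcg_map lin_comb_lcg by (rule lcg_cong) (simp add: E_i[OF j])
    finally show ?thesis .
  qed
  have comp0: "lin_comb P c L 0 = alg_add (R 0)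
        (lin_comb (R 0) (\<lambda>x. c (inj0 x)) (map (\<lambda>b. b 0) (filter (\<lambda>b. b \<in> inj0 ` B0) L)))
        (alg_smult (R 0) (sum_list (map c (filter (\<lambda>b. b \<notin> inj0 ` B0) L))) e)"
    if L: "set L \<subseteq> B" for L c
  proof -
    let ?g = "\<lambda>b. alg_smult (R 0) (c b) (b 0)"
    let ?Q = "\<lambda>b. b \<in> inj0 ` B0"
    have gC: "?g b \<in> alg_carrier (R 0)" if "b \<in> set L" for b
      using that L BcompC n0 ksm[OF K0] by auto
    have "lin_comb P c L 0 = lcg (R 0) ?g L" unfolding P_def using n0 by (rule prod_lin_comb_comp)
    also have "\<dots> = alg_add (R 0) (lcg (R 0) ?g (filter ?Q L)) (lcg (R 0) ?g (filter (\<lambda>b. \<not> ?Q b) L))"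
      by (rule lcg_split[OF K0 gC])
    also have "filter ?Q L = map inj0 (map (\<lambda>b. b 0) (filter ?Q L))"
      unfolding map_map by (rule map_idI[symmetric]) auto
    also have "lcg (R 0) ?g (map inj0 (map (\<lambda>b. b 0) (filter ?Q L))) =
       lin_comb (R 0) (\<lambda>x. c (inj0 x)) (map (\<lambda>b. b 0) (filter ?Q L))"
      unfolding lcg_map lin_comb_lcg by (rule lcg_cong) simp
    also have "lcg (R 0) ?g (filter (\<lambda>b. \<not> ?Q b) L) = lcg (R 0) (\<lambda>b. alg_smult (R 0) (c b) e) (filter (\<lambda>b. \<not> ?Q b) L)"
    proof (rule lcg_cong)
      fix b assume "b \<in> set (filter (\<lambda>b. \<not> ?Q b) L)"
      then have "b \<in> B" "b \<notin> inj0 ` B0" using L by auto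
      then have "b 0 = e" using Bcases[of b] by auto
      then show "?g b = alg_smult (R 0) (c b) e" by simp
    qed
    also have "\<dots> = alg_smult (R 0) (sum_list (map c (filter (\<lambda>b. \<not> ?Q b) L))) e"
      by (rule lcg_smult_e[OF K0 eC])
    finally show ?thesis .
  qed

  have indep: "\<forall>b\<in>set bs. c b = 0"
    if bs: "distinct bs" "set bs \<subseteq> B" "lin_comb P c bs = alg_zero P" for bs c
  proof -
    have cE0: "c (E j d) = 0" if j: "0 < j" "j < n" and d: "d \<in> set (map (\<lambda>b. b j) (filter (\<lambda>b. b \<in> E j ` Bj j) bs))" for j d
    proof -
      let ?ds = "map (\<lambda>b. b j) (filter (\<lambda>b. b \<in> E j ` Bj j) bs)"
      have "distinct ?ds" unfolding distinct_map
        using bs(1) by (auto intro!: inj_onI simp: E_i[OF j])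
      moreover have "set ?ds \<subseteq> Bj j" by (auto simp: E_i[OF j])
      moreover have "lin_comb (R j) (\<lambda>d. c (E j d)) ?ds = alg_zero (R j)"
        using compj[OF bs(2) j, of c] bs(3) Pzero[OF j(2)] by simp
      ultimately show ?thesis using LBj[OF j] d unfolding is_lin_basis_def by blast
    qed
    have cE: "c b = 0" if bin: "b \<in> set bs" and bn: "b \<notin> inj0 ` B0" for b
    proof -
      obtain i d where i: "0 < i" "i < n" "d \<in> Bj i" "b = E i d"
        using Bcases[of b] bin bn bs(2) by auto
      have "d \<in> set (map (\<lambda>b. b i) (filter (\<lambda>b. b \<in> E i ` Bj i) bs))"
      proof -
        have "b \<in> set (filter (\<lambda>b. b \<in> E i ` Bj i) bs)" using bin i by auto
        then have "b i \<in> set (map (\<lambda>b. b i) (filter (\<lambda>b. b \<in> E i ` Bj i) bs))" by auto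
        then show ?thesis using E_i[OF i(1,2)] i(4) by simp
      qed
      then show ?thesis using cE0[OF i(1,2)] i(4) by simp
    qed
    let ?xs = "map (\<lambda>b. b 0) (filter (\<lambda>b. b \<in> inj0 ` B0) bs)"
    have xsC: "set ?xs \<subseteq> alg_carrier (R 0)" using B0C by auto
    have "sum_list (map c (filter (\<lambda>b. b \<notin> inj0 ` B0) bs)) = 0"
      by (rule sum_list_zeros) (auto simp: cE)
    then have "alg_zero (R 0) = alg_add (R 0) (lin_comb (R 0) (\<lambda>x. c (inj0 x)) ?xs) (alg_zero (R 0))"
      using comp0[OF bs(2), of c] bs(3) Pzero[OF n0] ks0[OF K0 eC] by simp
    then have z: "lin_comb (R 0) (\<lambda>x. c (inj0 x)) ?xs = alg_zero (R 0)"
      using kzr[OF K0 lin_comb_closed[OF K0 xsC]] by simp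
    have "distinct ?xs" unfolding distinct_map using bs(1) by (auto intro!: inj_onI)
    moreover have "set ?xs \<subseteq> B0" by auto
    ultimately have c0: "\<forall>x\<in>set ?xs. c (inj0 x) = 0" using SB0 z unfolding is_lin_basis_def by blast
    show ?thesis
    proof
      fix b assume b: "b \<in> set bs"
      show "c b = 0"
      proof (cases "b \<in> inj0 ` B0")
        case True
        then obtain x where "x \<in> B0" "b = inj0 x" by auto
        then show ?thesis using c0 b by force
      qed (use cE b in auto)
    qed
  qed
  have span: "\<exists>bs c. distinct bs \<and> set bs \<subseteq> B \<and> f = lin_comb P c bs"
    if fP: "f \<in> alg_carrier P" for f
  proof -
    have fC: "f j \<in> alg_carrier (R j)" if "j < n" for j using fP that unfolding Pcar by auto
    obtain xs0 c0 where xs0: "distinct xs0" "set xs0 \<subseteq> B0" "f 0 = lin_comb (R 0) c0 xs0"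
      using SB0 fC[OF n0] unfolding is_lin_basis_def by blast
    have DCex: "\<forall>j. \<exists>p. 0 < j \<and> j < n \<longrightarrow> distinct (fst p) \<and> set (fst p) \<subseteq> Bj j \<and> f j = lin_comb (R j) (snd p) (fst p)"
    proof
      fix j
      show "\<exists>p. 0 < j \<and> j < n \<longrightarrow> distinct (fst p) \<and> set (fst p) \<subseteq> Bj j \<and> f j = lin_comb (R j) (snd p) (fst p)"
      proof (cases "0 < j \<and> j < n")
        case True
        then obtain bs c where "distinct bs" "set bs \<subseteq> Bj j" "f j = lin_comb (R j) c bs"
          using LBj[of j] fC[of j] unfolding is_lin_basis_def by blast
        then show ?thesis by (intro exI[of _ "(bs, c)"]) simp
      next
        case False
        then show ?thesis by blast
      qed
    qed
    obtain DC where DC: "\<And>j. 0 < j \<Longrightarrow> j < n \<Longrightarrow> distinct (fst (DC j)) \<and> set (fst (DC j)) \<subseteq> Bj j \<and> f j = lin_comb (R j) (snd (DC j)) (fst (DC j))"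
    proof -
      from choice[OF DCex] obtain DC0 where
        "\<forall>j. 0 < j \<and> j < n \<longrightarrow> distinct (fst (DC0 j)) \<and> set (fst (DC0 j)) \<subseteq> Bj j \<and> f j = lin_comb (R j) (snd (DC0 j)) (fst (DC0 j))"
        by blast
      then show ?thesis using that by blast
    qed
    define ds where "ds j = fst (DC j)" for j
    define cs where "cs j = snd (DC j)" for j
    have ds: "distinct (ds j)" "set (ds j) \<subseteq> Bj j" "f j = lin_comb (R j) (cs j) (ds j)" if "0 < j" "j < n" for j
      using DC[OF that] unfolding ds_def cs_def by auto
    define idx where "idx b = (LEAST i. 0 < i \<and> i < n \<and> b i \<noteq> alg_zero (R i))" for b :: "nat \<Rightarrow> 'a"
    have idxE: "idx (E i d) = i" if i: "0 < i" "i < n" "d \<in> Bj i" for i d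
      unfolding idx_def
    proof (rule Least_equality)
      show "0 < i \<and> i < n \<and> E i d i \<noteq> alg_zero (R i)" using i E_i[OF i(1,2)] Bjnz[OF i] by simp
      fix y assume "0 < y \<and> y < n \<and> E i d y \<noteq> alg_zero (R y)"
      then show "i \<le> y" using E_j[where j=y and i=i and d=d] by (cases "y = i") auto
    qed
    define Es where "Es = concat (map (\<lambda>i. map (E i) (ds i)) [1..<n])"
    have setEs: "set Es = (\<Union>i\<in>{1..<n}. E i ` set (ds i))" unfolding Es_def by auto
    define cE where "cE b = cs (idx b) (b (idx b))" for b
    define T where "T = sum_list (map cE Es)"
    define xs0' where "xs0' = (if e \<in> set xs0 then xs0 else e # xs0)"
    define c0' where "c0' = (if e \<in> set xs0 then c0(e := c0 e + (- T)) else c0(e := - T))"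
    define L where "L = map inj0 xs0' @ Es"
    define c where "c b = (if b \<in> inj0 ` B0 then c0' (b 0) else cE b)" for b
    have xs0'B: "set xs0' \<subseteq> B0" using xs0 eB0 unfolding xs0'_def by auto
    have xs0'd: "distinct xs0'" using xs0 unfolding xs0'_def by auto
    have EsD: "\<exists>i d. 0 < i \<and> i < n \<and> d \<in> Bj i \<and> b = E i d" if bE: "b \<in> set Es" for b
    proof -
      obtain i d where i: "i \<in> {1..<n}" "d \<in> set (ds i)" "b = E i d" using bE setEs by auto
      then have "0 < i" "i < n" by auto
      then show ?thesis using i ds(2)[of i] by blast
    qed
    have EsB: "set Es \<subseteq> B"
    proof
      fix b assume "b \<in> set Es"
      then obtain i d where "0 < i" "i < n" "d \<in> Bj i" "b = E i d" using EsD by blast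
      then show "b \<in> B" unfolding B_def by auto
    qed
    have EsN: "b \<notin> inj0 ` B0" if bE: "b \<in> set Es" for b
    proof -
      obtain i d where "0 < i" "i < n" "d \<in> Bj i" "b = E i d" using EsD bE by blast
      then show ?thesis using inj0_ne_E by blast
    qed
    have LB: "set L \<subseteq> B" unfolding L_def B_def using xs0'B EsB B_def by auto
    have dL: "distinct L"
    proof -
      have "distinct (map inj0 xs0')" unfolding distinct_map using xs0'd
        by (auto intro!: inj_onI) (metis inj0_0)
      moreover have "distinct Es" unfolding Es_def
      proof (rule distinct_concat_blocks)
        fix i assume "i \<in> set [1..<n]"
        then show "distinct (map (E i) (ds i))" unfolding distinct_map using ds[of i] E_inj[of i]
          by (auto intro!: inj_onI)
      next
        fix i k assume ik: "i \<in> set [1..<n]" "k \<in> set [1..<n]" "i \<noteq> k"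
        show "set (map (E i) (ds i)) \<inter> set (map (E k) (ds k)) = {}"
        proof -
          have i: "0 < i" "i < n" and ki: "k \<noteq> i" using ik by auto
          have "E i d \<noteq> E k d'" if "d \<in> set (ds i)" for d d'
            using E_ne_E[OF i _ ki] ds(2)[OF i] that by blast
          then show ?thesis by auto
        qed
      qed simp
      moreover have "set (map inj0 xs0') \<inter> set Es = {}" using EsN xs0'B by auto
      ultimately show ?thesis unfolding L_def by simp
    qed
    have eq: "f = lin_comb P c L"
    proof (rule ext)
      fix j
      show "f j = lin_comb P c L j"
      proof (cases "j < n")
        case False
        have fP': "f \<in> (\<Pi>\<^sub>E i\<in>{..<n}. alg_carrier (R i))" using fP unfolding Pcar .
        have "f j = undefined" using PiE_arb[OF fP'] False by simp
        moreover have "lin_comb P c L j = undefined" unfolding P_def using False by (rule prod_lin_comb_out)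
        ultimately show ?thesis by simp
      next
        case jn: True
        show ?thesis
        proof (cases "j = 0")
          case False
          then have j: "0 < j" "j < n" using jn by auto
          let ?Q = "\<lambda>b. b \<in> E j ` Bj j"
          have f1: "filter ?Q (map inj0 xs0') = []"
            using inj0_ne_E[OF j] by (auto simp: filter_empty_conv)
          have f2: "filter ?Q Es = map (E j) (ds j)" unfolding Es_def
          proof (rule filter_concat_blocks)
            show "j \<in> set [1..<n]" using j by auto
            fix i assume iin: "i \<in> set [1..<n]" and ij: "i \<noteq> j"
            have "E i d \<notin> E j ` Bj j" for d
            proof
              assume "E i d \<in> E j ` Bj j"
              then obtain d' where d': "d' \<in> Bj j" "E i d = E j d'" by auto
              show False using E_ne_E[OF j d'(1) ij] d'(2) by metis
            qed
            then show "filter ?Q (map (E i) (ds i)) = []"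
              by (simp add: filter_empty_conv)
          next
            show "filter ?Q (map (E j) (ds j)) = map (E j) (ds j)"
              by (rule filter_True) (use ds(2)[OF j] in auto)
          qed simp
          have "lin_comb P c L j = lin_comb (R j) (\<lambda>d. c (E j d)) (map (\<lambda>b. b j) (map (E j) (ds j)))"
            using compj[OF LB j, of c] f1 f2 unfolding L_def by simp
          also have "map (\<lambda>b. b j) (map (E j) (ds j)) = ds j"
            by (simp add: map_idI E_i[OF j])
          also have "lin_comb (R j) (\<lambda>d. c (E j d)) (ds j) = lin_comb (R j) (cs j) (ds j)"
          proof (rule lin_comb_cong)
            fix d assume d: "d \<in> set (ds j)"
            then have dB: "d \<in> Bj j" using ds[OF j] by auto
            have "E j d \<notin> inj0 ` B0"
            proof
              assume "E j d \<in> inj0 ` B0"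
              then obtain x where "E j d = inj0 x" by auto
              then show False using inj0_ne_E[OF j dB, of x] by metis
            qed
            then show "c (E j d) = cs j d" unfolding c_def cE_def using idxE[OF j dB] E_i[OF j] by simp
          qed
          finally show ?thesis using ds[OF j] by simp
        next
          case True
          let ?Q = "\<lambda>b. b \<in> inj0 ` B0"
          have fa: "filter ?Q (map inj0 xs0') = map inj0 xs0'"
            by (rule filter_True) (use xs0'B in auto)
          have fb: "filter ?Q Es = []" unfolding filter_empty_conv using EsN by blast
          have fc: "filter (\<lambda>b. \<not> ?Q b) (map inj0 xs0') = []"
            unfolding filter_empty_conv using xs0'B by auto
          have fd: "filter (\<lambda>b. \<not> ?Q b) Es = Es"
            by (rule filter_True) (use EsN in auto)
          have f1: "filter ?Q L = map inj0 xs0'" unfolding L_def using fa fb by simp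
          have f2: "filter (\<lambda>b. \<not> ?Q b) L = Es" unfolding L_def using fc fd by simp
          have mm: "map (\<lambda>b. b 0) (map inj0 xs0') = xs0'" by (simp add: map_idI)
          have cc: "lin_comb (R 0) (\<lambda>x. c (inj0 x)) xs0' = lin_comb (R 0) c0' xs0'"
            by (rule lin_comb_cong) (use xs0'B in \<open>auto simp: c_def\<close>)
          have TT: "sum_list (map c Es) = T" unfolding T_def
            by (rule arg_cong[where f = sum_list], rule map_cong) (auto simp: c_def EsN)
          have "lin_comb P c L 0 = alg_add (R 0) (lin_comb (R 0) c0' xs0') (alg_smult (R 0) T e)"
            using comp0[OF LB, of c] f1 f2 mm cc TT by simp
          also have "\<dots> = f 0"
          proof -
            have x0C: "set xs0 \<subseteq> alg_carrier (R 0)" using xs0 B0C by auto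
            have L0C: "lin_comb (R 0) c0 xs0 \<in> alg_carrier (R 0)" using lin_comb_closed[OF K0 x0C] .
            have uC: "alg_smult (R 0) (- T) e \<in> alg_carrier (R 0)" using ksm[OF K0 eC] .
            have vC: "alg_smult (R 0) T e \<in> alg_carrier (R 0)" using ksm[OF K0 eC] .
            show ?thesis
          proof (cases "e \<in> set xs0")
            case True
            have x0C: "set xs0 \<subseteq> alg_carrier (R 0)" using xs0 B0C by auto
            have "lin_comb (R 0) c0' xs0' = alg_add (R 0) (lin_comb (R 0) c0 xs0) (alg_smult (R 0) (- T) e)"
              unfolding c0'_def xs0'_def if_P[OF True] by (rule lin_comb_upd[OF K0 xs0(1) True x0C])
            then show ?thesis
              using kassoc[OF K0 L0C uC vC] kneg[OF K0 eC, of T] kzr[OF K0 L0C] xs0(3) by simp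
          next
            case False
            have x0C: "set xs0 \<subseteq> alg_carrier (R 0)" using xs0 B0C by auto
            have l0: "lin_comb (R 0) (c0(e := - T)) xs0 = lin_comb (R 0) c0 xs0"
              by (rule lin_comb_cong) (use False in auto)
            have "lin_comb (R 0) c0' xs0' = alg_add (R 0) (alg_smult (R 0) (- T) e) (lin_comb (R 0) c0 xs0)"
              unfolding c0'_def xs0'_def using False l0 by simp
            then show ?thesis
              using kassoc[OF K0 uC L0C vC] kcomm[OF K0 L0C vC] kassoc[OF K0 uC vC L0C]
                kneg[OF K0 eC, of T] kzl[OF K0 L0C] xs0(3) by simp
          qed
          qed
          finally show ?thesis using True by simp
        qed
      qed
    qed
    show ?thesis using dL LB eq by blast
  qed
  have "strong_mult_basis P B"
    unfolding strong_mult_basis_def is_lin_basis_def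
  proof (intro conjI allI impI ballI)
    show "B \<subseteq> alg_carrier P" by (rule BP)
  next
    fix bs c b assume "distinct bs \<and> set bs \<subseteq> B \<and> lin_comb P c bs = alg_zero P" "b \<in> set bs"
    then show "c b = 0" using indep by blast
  next
    fix x assume "x \<in> alg_carrier P"
    then show "\<exists>bs c. distinct bs \<and> set bs \<subseteq> B \<and> x = lin_comb P c bs" by (rule span)
  next
    fix b b' assume "b \<in> B" "b' \<in> B"
    then show "alg_mult P b b' \<in> B" by (rule mul)
  qed
  then show ?thesis unfolding P_def by blast
qed

end
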